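(* Let $X_n=(\mathbb{C}^n,\|\cdot\|)$ be a symmetric Banach lattice and $J\subset\Lambda_T(m,n)$ an index set, where $m\le n$. Then $$\widehat{\boldsymbol{\lambda}}\big(\mathcal{P}_J(X_n)\big)\le e^m\Big(\frac{\varphi_{X_n'}(n)}{\varphi_{X_n'}(m)}\Big)^m.$$
   Context: A Banach lattice $X_n=(\mathbb{C}^n,\|\cdot\|)$ is a norm with $\|z\|\le\|w\|$ whenever $|z_k|\le|w_k|$ for all $k$; it is symmetric if $\|(z_{\sigma(k)})\|=\|z\|$ for every permutation $\sigma$. $X_n'$ is the Köthe dual ($\|x\|_{X_n'}=\sup\{\sum|x_ky_k|:\|y\|\le1\}$) and $\varphi_{X_n'}(k)=\|\sum_{j=1}^ke_j\|_{X_n'}$. $\Lambda_T(m,n)$ is the set of $\alpha\in\{0,1\}^n$ with $|\alpha|=m$. $c_{X_n}(\alpha)=1/\sup_{z\in B_{X_n}}|z^\alpha|$ ($B_{X_n}$ the open unit ball), and $\widehat{\boldsymbol{\lambda}}(\mathcal{P}_J(X_n))=\sup_{z\in B_{X_n}}\sum_{\alpha\in J}c_{X_n}(\alpha)|z^\alpha|$. *)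

theory Defs
  imports "HOL-Analysis.Analysis"
begin

text \<open>The space C^n is represented by functions nat => complex that vanish
  outside the index set {..<n}.\<close>

definition vecs :: "nat \<Rightarrow> (nat \<Rightarrow> complex) set" where
  "vecs n = {z. \<forall>k\<ge>n. z k = 0}"

text \<open>N is a lattice norm on C^n (finite-dimensional, hence Banach).\<close>
definition banach_lattice :: "nat \<Rightarrow> ((nat \<Rightarrow> complex) \<Rightarrow> real) \<Rightarrow> bool" where
  "banach_lattice n N \<longleftrightarrow>
     (\<forall>z\<in>vecs n. N z = 0 \<longleftrightarrow> z = (\<lambda>_. 0)) \<and>
     (\<forall>z\<in>vecs n. \<forall>c. N (\<lambda>k. c * z k) = cmod c * N z) \<and>
     (\<forall>z\<in>vecs n. \<forall>w\<in>vecs n. N (\<lambda>k. z k + w k) \<le> N z + N w) \<and>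
     (\<forall>z\<in>vecs n. \<forall>w\<in>vecs n. (\<forall>k<n. cmod (z k) \<le> cmod (w k)) \<longrightarrow> N z \<le> N w)"

definition symmetric_lattice :: "nat \<Rightarrow> ((nat \<Rightarrow> complex) \<Rightarrow> real) \<Rightarrow> bool" where
  "symmetric_lattice n N \<longleftrightarrow> banach_lattice n N \<and>
     (\<forall>\<sigma> z. \<sigma> permutes {..<n} \<longrightarrow> z \<in> vecs n \<longrightarrow> N (z \<circ> \<sigma>) = N z)"

definition kothe_dual :: "nat \<Rightarrow> ((nat \<Rightarrow> complex) \<Rightarrow> real) \<Rightarrow> (nat \<Rightarrow> complex) \<Rightarrow> real" where
  "kothe_dual n N x = (SUP y\<in>{y\<in>vecs n. N y \<le> 1}. \<Sum>k<n. cmod (x k * y k))"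

text \<open>Fundamental function of the dual: phi_{X_n'}(k) = || e_1 + ... + e_k ||_{X_n'}.\<close>
definition fund_dual :: "nat \<Rightarrow> ((nat \<Rightarrow> complex) \<Rightarrow> real) \<Rightarrow> nat \<Rightarrow> real" where
  "fund_dual n N k = kothe_dual n N (\<lambda>j. if j < k then 1 else 0)"

definition Lambda_T :: "nat \<Rightarrow> nat \<Rightarrow> (nat \<Rightarrow> nat) set" where
  "Lambda_T m n = {\<alpha>. (\<forall>k. \<alpha> k \<le> 1) \<and> (\<forall>k\<ge>n. \<alpha> k = 0) \<and> (\<Sum>k<n. \<alpha> k) = m}"

definition monom :: "nat \<Rightarrow> (nat \<Rightarrow> nat) \<Rightarrow> (nat \<Rightarrow> complex) \<Rightarrow> complex" where
  "monom n \<alpha> z = (\<Prod>k<n. z k ^ \<alpha> k)"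

definition open_ball :: "nat \<Rightarrow> ((nat \<Rightarrow> complex) \<Rightarrow> real) \<Rightarrow> (nat \<Rightarrow> complex) set" where
  "open_ball n N = {z\<in>vecs n. N z < 1}"

definition cX :: "nat \<Rightarrow> ((nat \<Rightarrow> complex) \<Rightarrow> real) \<Rightarrow> (nat \<Rightarrow> nat) \<Rightarrow> real" where
  "cX n N \<alpha> = 1 / (SUP z\<in>open_ball n N. cmod (monom n \<alpha> z))"

definition lambda_hat :: "nat \<Rightarrow> ((nat \<Rightarrow> complex) \<Rightarrow> real) \<Rightarrow> (nat \<Rightarrow> nat) set \<Rightarrow> real" where
  "lambda_hat n N J = (SUP z\<in>open_ball n N. \<Sum>\<alpha>\<in>J. cX n N \<alpha> * cmod (monom n \<alpha> z))"

end

theory Submission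
  imports Defs "HOL-Combinatorics.Permutations"
begin


definition esym :: "nat set \<Rightarrow> (nat \<Rightarrow> real) \<Rightarrow> nat \<Rightarrow> real" where
  "esym A x m = (\<Sum>S\<in>{S. S \<subseteq> A \<and> card S = m}. \<Prod>k\<in>S. x k)"

lemma bernoulli_like: "(p::real) \<ge> 0 \<Longrightarrow> a \<ge> 0 \<Longrightarrow> p ^ Suc k + real (Suc k) * a * p ^ k \<le> (p + a) ^ Suc k"
proof (induction k)
  case 0 then show ?case by simp
next
  case (Suc k)
  have "p ^ Suc (Suc k) + real (Suc (Suc k)) * a * p ^ Suc k
      \<le> (p ^ Suc k + real (Suc k) * a * p ^ k) * (p + a)"
    using Suc.prems by (simp add: algebra_simps)
  also have "\<dots> \<le> (p + a) ^ Suc k * (p + a)"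
    using Suc by (intro mult_right_mono) auto
  finally show ?case by (simp add: ac_simps)
qed

lemma esym_0: "finite A \<Longrightarrow> esym A x 0 = 1"
proof -
  assume "finite A"
  then have "{S. S \<subseteq> A \<and> card S = 0} = {{}}"
    using finite_subset by fastforce
  then show ?thesis by (simp add: esym_def)
qed

lemma esym_empty_Suc: "esym {} x (Suc k) = 0"
  by (simp add: esym_def)

lemma esym_insert:
  assumes "finite A" "a \<notin> A"
  shows "esym (insert a A) x (Suc k) = esym A x (Suc k) + x a * esym A x k"
proof -
  have eq: "{S. S \<subseteq> insert a A \<and> card S = Suc k} =
      {S. S \<subseteq> A \<and> card S = Suc k} \<union> insert a ` {S. S \<subseteq> A \<and> card S = k}"
  proof (rule set_eqI, rule iffI)
    fix S assume S: "S \<in> {S. S \<subseteq> insert a A \<and> card S = Suc k}"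
    show "S \<in> {S. S \<subseteq> A \<and> card S = Suc k} \<union> insert a ` {S. S \<subseteq> A \<and> card S = k}"
    proof (cases "a \<in> S")
      case True
      have fS: "finite S" using S assms(1) finite_subset by auto
      have "S = insert a (S - {a})" using True by auto
      moreover have "S - {a} \<subseteq> A" "card (S - {a}) = k" using S True fS by auto
      ultimately show ?thesis by blast
    next
      case False then show ?thesis using S by auto
    qed
  next
    fix S assume "S \<in> {S. S \<subseteq> A \<and> card S = Suc k} \<union> insert a ` {S. S \<subseteq> A \<and> card S = k}"
    then show "S \<in> {S. S \<subseteq> insert a A \<and> card S = Suc k}"
      using assms finite_subset by (auto simp: card_insert_if)
  qed
  have fin1: "finite {S. S \<subseteq> A \<and> card S = Suc k}" "finite {S. S \<subseteq> A \<and> card S = k}"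
    using assms(1) by auto
  have disj: "{S. S \<subseteq> A \<and> card S = Suc k} \<inter> insert a ` {S. S \<subseteq> A \<and> card S = k} = {}"
    using assms by auto
  have inj: "inj_on (insert a) {S. S \<subseteq> A \<and> card S = k}"
    using assms(2) by (intro inj_onI) (metis insert_absorb insert_ident mem_Collect_eq subsetD)
  have "esym (insert a A) x (Suc k) = esym A x (Suc k) +
        (\<Sum>S\<in>insert a ` {S. S \<subseteq> A \<and> card S = k}. \<Prod>k\<in>S. x k)"
    unfolding esym_def eq using fin1 disj by (simp add: sum.union_disjoint)
  also have "(\<Sum>S\<in>insert a ` {S. S \<subseteq> A \<and> card S = k}. \<Prod>k\<in>S. x k)
      = (\<Sum>S\<in>{S. S \<subseteq> A \<and> card S = k}. x a * (\<Prod>k\<in>S. x k))"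
    using inj assms by (simp add: sum.reindex) (intro sum.cong refl prod.insert; auto intro: finite_subset)
  also have "\<dots> = x a * esym A x k" by (simp add: esym_def sum_distrib_left)
  finally show ?thesis .
qed

lemma esym_nonneg: "(\<And>k. x k \<ge> 0) \<Longrightarrow> esym A x m \<ge> 0"
  unfolding esym_def by (intro sum_nonneg prod_nonneg) auto

lemma esym_bound:
  assumes "finite A" "\<And>k. x k \<ge> 0"
  shows "fact m * esym A x m \<le> (\<Sum>k\<in>A. x k) ^ m"
  using assms(1)
proof (induction A arbitrary: m rule: finite_induct)
  case empty
  then show ?case by (cases m) (auto simp: esym_0 esym_empty_Suc)
next
  case (insert a A)
  show ?case
  proof (cases m)
    case 0 then show ?thesis using insert by (simp add: esym_0)
  next
    case (Suc k)
    let ?p = "\<Sum>k\<in>A. x k"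
    have p0: "?p \<ge> 0" using assms(2) by (simp add: sum_nonneg)
    have "fact m * esym (insert a A) x m = fact (Suc k) * esym A x (Suc k) + real (Suc k) * x a * (fact k * esym A x k)"
      using insert Suc by (simp add: esym_insert algebra_simps)
    also have "\<dots> \<le> ?p ^ Suc k + real (Suc k) * x a * ?p ^ k"
      using insert.IH[of "Suc k"] insert.IH[of k] assms(2)[of a]
      by (intro add_mono mult_left_mono) auto
    also have "\<dots> \<le> (?p + x a) ^ Suc k" using bernoulli_like p0 assms(2) by blast
    finally show ?thesis using insert Suc by (simp add: add.commute)
  qed
qed



definition ind :: "nat set \<Rightarrow> nat \<Rightarrow> nat" where
  "ind S = (\<lambda>k. if k \<in> S then 1 else 0)"

lemma sum_ind: "S \<subseteq> {..<n} \<Longrightarrow> (\<Sum>k<n. ind S k) = card S"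
  unfolding ind_def by (simp add: sum.If_cases Int_absorb1)

lemma bij_ind: "bij_betw ind {S. S \<subseteq> {..<n} \<and> card S = m} (Lambda_T m n)"
proof (rule bij_betw_imageI)
  show "inj_on ind {S. S \<subseteq> {..<n} \<and> card S = m}"
    proof (rule inj_onI)
    fix S T assume "S \<in> {S. S \<subseteq> {..<n} \<and> card S = m}" "T \<in> {S. S \<subseteq> {..<n} \<and> card S = m}" "ind S = ind T"
    then have "\<And>k. (k \<in> S) = (k \<in> T)" unfolding ind_def fun_eq_iff by (metis one_neq_zero)
    then show "S = T" by blast
  qed
  show "ind ` {S. S \<subseteq> {..<n} \<and> card S = m} = Lambda_T m n"
  proof (rule set_eqI, rule iffI)
    fix \<alpha> assume "\<alpha> \<in> ind ` {S. S \<subseteq> {..<n} \<and> card S = m}"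
    then obtain S where S: "S \<subseteq> {..<n}" "card S = m" "\<alpha> = ind S" by auto
    then show "\<alpha> \<in> Lambda_T m n" using sum_ind[OF S(1)]
      by (auto simp: Lambda_T_def ind_def)
  next
    fix \<alpha> assume a: "\<alpha> \<in> Lambda_T m n"
    let ?S = "{k. \<alpha> k = 1}"
    have a1: "\<And>k. \<alpha> k \<le> 1" and a2: "\<And>k. k \<ge> n \<Longrightarrow> \<alpha> k = 0" and a3: "(\<Sum>k<n. \<alpha> k) = m"
      using a unfolding Lambda_T_def by auto
    have sub: "?S \<subseteq> {..<n}"
    proof
      fix k assume "k \<in> ?S"
      then have "\<alpha> k = 1" by simp
      then show "k \<in> {..<n}" using a2[of k] by (cases "k < n") auto
    qed
    have eqa: "\<alpha> = ind ?S"
    proof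
      fix k show "\<alpha> k = ind ?S k" using a1[of k] unfolding ind_def by auto
    qed
    have "card ?S = m" using sum_ind[OF sub] a3 eqa by simp
    then show "\<alpha> \<in> ind ` {S. S \<subseteq> {..<n} \<and> card S = m}" using sub eqa by blast
  qed
qed

lemma finite_Lambda_T: "finite (Lambda_T m n)"
proof -
  have "finite {S. S \<subseteq> {..<n} \<and> card S = m}" by auto
  then show ?thesis using bij_ind[of n m] bij_betw_finite by blast
qed

lemma monom_ind: "S \<subseteq> {..<n} \<Longrightarrow> monom n (ind S) z = (\<Prod>k\<in>S. z k)"
proof -
  assume S: "S \<subseteq> {..<n}"
  have "monom n (ind S) z = (\<Prod>k<n. if k \<in> S then z k else 1)"
    unfolding monom_def ind_def by (intro prod.cong refl) auto
  also have "\<dots> = prod z ({..<n} \<inter> S)" by (simp add: prod.If_cases)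
  also have "{..<n} \<inter> S = S" using S by blast
  finally show ?thesis .
qed

lemma sum_Lambda_T:
  "(\<Sum>\<alpha>\<in>Lambda_T m n. cmod (monom n \<alpha> z)) = esym {..<n} (\<lambda>k. cmod (z k)) m"
proof -
  have "(\<Sum>\<alpha>\<in>Lambda_T m n. cmod (monom n \<alpha> z)) =
        (\<Sum>S\<in>{S. S \<subseteq> {..<n} \<and> card S = m}. cmod (monom n (ind S) z))"
    using sum.reindex_bij_betw[OF bij_ind, symmetric] by blast
  also have "\<dots> = esym {..<n} (\<lambda>k. cmod (z k)) m"
    unfolding esym_def by (intro sum.cong refl) (simp add: monom_ind prod_norm)
  finally show ?thesis .
qed



lemma rot_bij:
  assumes "0 < (m::nat)"
  shows "bij_betw (\<lambda>i. (k + i) mod m) {..<m} {..<m}"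
proof -
  have inj: "inj_on (\<lambda>i. (k + i) mod m) {..<m}"
  proof (rule inj_onI)
    fix i j assume ij: "i \<in> {..<m}" "j \<in> {..<m}" "(k + i) mod m = (k + j) mod m"
    show "i = j"
    proof (rule ccontr)
      assume ne: "i \<noteq> j"
      have key: "\<And>a b. a < m \<Longrightarrow> b < m \<Longrightarrow> a < b \<Longrightarrow> (k + a) mod m = (k + b) mod m \<Longrightarrow> False"
      proof -
        fix a b assume ab: "a < m" "b < m" "a < b" "(k + a) mod m = (k + b) mod m"
        then have "m dvd (k + b - (k + a))" using mod_eq_dvd_iff_nat[of "k+a" "k+b" m] by simp
        then have "m dvd (b - a)" by simp
        moreover have "0 < b - a" "b - a < m" using ab by auto
        ultimately show False using nat_dvd_not_less by blast
      qed
      show False using ne ij key[of i j] key[of j i] by (cases "i < j") auto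
    qed
  qed
  moreover have "(\<lambda>i. (k + i) mod m) ` {..<m} \<subseteq> {..<m}" using assms by auto
  ultimately have "(\<lambda>i. (k + i) mod m) ` {..<m} = {..<m}"
    by (meson endo_inj_surj finite_lessThan)
  then show ?thesis using inj by (simp add: bij_betw_def)
qed



lemma vecs_scale: "z \<in> vecs n \<Longrightarrow> (\<lambda>k. c * z k) \<in> vecs n" by (simp add: vecs_def)
lemma vecs_add: "z \<in> vecs n \<Longrightarrow> w \<in> vecs n \<Longrightarrow> (\<lambda>k. z k + w k) \<in> vecs n" by (simp add: vecs_def)
lemma vecs_zero: "(\<lambda>_. 0) \<in> vecs n" by (simp add: vecs_def)
lemma vecs_sum: "(\<And>i. i \<in> I \<Longrightarrow> v i \<in> vecs n) \<Longrightarrow> (\<lambda>k. \<Sum>i\<in>I. v i k) \<in> vecs n"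
  by (auto simp: vecs_def intro!: sum.neutral)

context
  fixes n :: nat and N :: "(nat \<Rightarrow> complex) \<Rightarrow> real"
  assumes bl: "banach_lattice n N"
begin

lemma bl_mono: "z \<in> vecs n \<Longrightarrow> w \<in> vecs n \<Longrightarrow> (\<And>k. k < n \<Longrightarrow> cmod (z k) \<le> cmod (w k)) \<Longrightarrow> N z \<le> N w"
  using bl unfolding banach_lattice_def by blast

lemma bl_scale: "z \<in> vecs n \<Longrightarrow> N (\<lambda>k. c * z k) = cmod c * N z"
  using bl unfolding banach_lattice_def by blast

lemma bl_tri: "z \<in> vecs n \<Longrightarrow> w \<in> vecs n \<Longrightarrow> N (\<lambda>k. z k + w k) \<le> N z + N w"
  using bl unfolding banach_lattice_def by blast

lemma bl_zero: "N (\<lambda>_. 0) = 0"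
  using bl vecs_zero unfolding banach_lattice_def by blast

lemma bl_pos: "z \<in> vecs n \<Longrightarrow> z \<noteq> (\<lambda>_. 0) \<Longrightarrow> N z \<noteq> 0"
  using bl unfolding banach_lattice_def by blast

lemma bl_nonneg: "z \<in> vecs n \<Longrightarrow> N z \<ge> 0"
  using bl_mono[OF vecs_zero, of z] bl_zero by simp

lemma bl_abs: "z \<in> vecs n \<Longrightarrow> N (\<lambda>k. complex_of_real (cmod (z k))) = N z"
proof -
  assume z: "z \<in> vecs n"
  have v: "(\<lambda>k. complex_of_real (cmod (z k))) \<in> vecs n" using z by (simp add: vecs_def)
  show ?thesis using bl_mono[OF v z] bl_mono[OF z v] by (simp add: antisym)
qed

lemma bl_sum: "finite I \<Longrightarrow> (\<And>i. i \<in> I \<Longrightarrow> v i \<in> vecs n) \<Longrightarrow> N (\<lambda>k. \<Sum>i\<in>I. v i k) \<le> (\<Sum>i\<in>I. N (v i))"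
proof (induction I rule: finite_induct)
  case empty then show ?case by (simp add: bl_zero)
next
  case (insert a I)
  have "N (\<lambda>k. \<Sum>i\<in>insert a I. v i k) = N (\<lambda>k. v a k + (\<Sum>i\<in>I. v i k))"
    using insert by simp
  also have "\<dots> \<le> N (v a) + N (\<lambda>k. \<Sum>i\<in>I. v i k)"
    using insert by (intro bl_tri vecs_sum) auto
  also have "\<dots> \<le> N (v a) + (\<Sum>i\<in>I. N (v i))" using insert by simp
  finally show ?case using insert by simp
qed

definition ee :: "nat \<Rightarrow> nat \<Rightarrow> complex" where "ee k = (\<lambda>j. if j = k then 1 else 0)"

lemma ee_vecs: "k < n \<Longrightarrow> ee k \<in> vecs n" by (auto simp: vecs_def ee_def)

lemma ee_pos: "k < n \<Longrightarrow> N (ee k) > 0"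
proof -
  assume k: "k < n"
  have "ee k \<noteq> (\<lambda>_. 0)" by (auto simp: ee_def fun_eq_iff)
  then show ?thesis using bl_pos[OF ee_vecs[OF k]] bl_nonneg[OF ee_vecs[OF k]] by linarith
qed

lemma coord_le: "z \<in> vecs n \<Longrightarrow> k < n \<Longrightarrow> cmod (z k) * N (ee k) \<le> N z"
proof -
  assume z: "z \<in> vecs n" and k: "k < n"
  have "N (\<lambda>j. z k * ee k j) = cmod (z k) * N (ee k)" using bl_scale[OF ee_vecs[OF k]] .
  moreover have "N (\<lambda>j. z k * ee k j) \<le> N z"
    using z k by (intro bl_mono vecs_scale ee_vecs) (auto simp: ee_def)
  ultimately show ?thesis by simp
qed

definition Cn :: real where "Cn = (\<Sum>j<n. 1 / N (ee j))"

lemma Cn_nonneg: "Cn \<ge> 0"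
  unfolding Cn_def using ee_pos by (intro sum_nonneg) (simp add: less_imp_le)

lemma coord_bound: "z \<in> vecs n \<Longrightarrow> N z \<le> 1 \<Longrightarrow> cmod (z k) \<le> Cn"
proof (cases "k < n")
  case True
  assume z: "z \<in> vecs n" "N z \<le> 1"
  have p: "N (ee k) > 0" using ee_pos True .
  have "cmod (z k) * N (ee k) \<le> 1" using coord_le[OF z(1) True] z(2) by linarith
  then have "cmod (z k) \<le> 1 / N (ee k)" using p by (simp add: field_simps)
  also have "\<dots> \<le> Cn" unfolding Cn_def
    using True ee_pos by (intro member_le_sum) (auto simp: less_imp_le)
  finally show ?thesis .
next
  case False
  assume z: "z \<in> vecs n" "N z \<le> 1"
  then show ?thesis using False Cn_nonneg by (simp add: vecs_def)
qed

end



lemma rho_permutes: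
  fixes m n i :: nat
  assumes "0 < m" "m \<le> n"
  shows "(\<lambda>k. if k < m then (k + i) mod m else k) permutes {..<n}"
proof (rule bij_imp_permutes)
  let ?r = "\<lambda>k::nat. if k < m then (k + i) mod m else k"
  have b1: "bij_betw ?r {..<m} {..<m}"
  proof -
    have "bij_betw (\<lambda>k. (i + k) mod m) {..<m} {..<m} = bij_betw ?r {..<m} {..<m}"
      by (rule bij_betw_cong) (simp add: add.commute)
    then show ?thesis using rot_bij[OF assms(1), of i] by simp
  qed
  have b2: "bij_betw ?r {m..<n} {m..<n}"
  proof -
    have "bij_betw id {m..<n} {m..<n} = bij_betw ?r {m..<n} {m..<n}"
      by (rule bij_betw_cong) simp
    then show ?thesis by simp
  qed
  have "bij_betw ?r ({..<m} \<union> {m..<n}) ({..<m} \<union> {m..<n})"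
    by (rule bij_betw_combine[OF b1 b2]) auto
  moreover have "{..<m} \<union> {m..<n} = {..<n}" using assms by auto
  ultimately show "bij_betw ?r {..<n} {..<n}" by simp
  show "\<And>k. k \<notin> {..<n} \<Longrightarrow> ?r k = k" using assms by simp
qed

lemma avg_le:
  assumes sym: "symmetric_lattice n N" and m: "0 < m" "m \<le> n" and y: "y \<in> vecs n"
  shows "N (\<lambda>k. if k < m then complex_of_real ((\<Sum>j<m. cmod (y j)) / m) else 0) \<le> N y"
proof -
  have bl: "banach_lattice n N" using sym by (simp add: symmetric_lattice_def)
  have perm: "\<And>\<sigma> z. \<sigma> permutes {..<n} \<Longrightarrow> z \<in> vecs n \<Longrightarrow> N (z \<circ> \<sigma>) = N z"
    using sym by (simp add: symmetric_lattice_def)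
  define s where "s = (\<Sum>j<m. cmod (y j))"
  define w where "w = (\<lambda>k. if k < m then complex_of_real (cmod (y k)) else 0)"
  define r where "r = (\<lambda>i k::nat. if k < m then (k + i) mod m else k)"
  have wv: "w \<in> vecs n" using m by (auto simp: vecs_def w_def)
  have wy: "N w \<le> N y" using m by (intro bl_mono[OF bl wv y]) (auto simp: w_def)
  have rp: "\<And>i. r i permutes {..<n}" unfolding r_def using rho_permutes[OF m] .
  have vv: "\<And>i. w \<circ> r i \<in> vecs n"
    using m unfolding vecs_def w_def r_def by simp
  have Nwr: "\<And>i. N (w \<circ> r i) = N w" using perm[OF rp wv] .
  have sumeq: "(\<lambda>k. if k < m then complex_of_real (s / m) else 0)
      = (\<lambda>k. complex_of_real (1 / m) * (\<Sum>i<m. (w \<circ> r i) k))"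
  proof
    fix k show "(if k < m then complex_of_real (s / m) else 0)
      = complex_of_real (1 / m) * (\<Sum>i<m. (w \<circ> r i) k)"
    proof (cases "k < m")
      case True
      have "(\<Sum>i<m. (w \<circ> r i) k) = (\<Sum>i<m. complex_of_real (cmod (y ((k + i) mod m))))"
        using True m by (intro sum.cong refl) (simp add: w_def r_def)
      also have "\<dots> = complex_of_real (\<Sum>i<m. cmod (y ((k + i) mod m)))" by simp
      also have "(\<Sum>i<m. cmod (y ((k + i) mod m))) = s"
        unfolding s_def using sum.reindex_bij_betw[OF rot_bij[OF m(1), of k], of "\<lambda>j. cmod (y j)"] .
      finally show ?thesis using True by simp
    next
      case False
      then show ?thesis by (simp add: w_def r_def)
    qed
  qed
  have "N (\<lambda>k. complex_of_real (1 / m) * (\<Sum>i<m. (w \<circ> r i) k))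
      = (1 / m) * N (\<lambda>k. \<Sum>i<m. (w \<circ> r i) k)"
  proof -
    have "(\<lambda>k. \<Sum>i<m. (w \<circ> r i) k) \<in> vecs n" using vecs_sum[of "{..<m}" "\<lambda>i. w \<circ> r i"] vv by blast
    from bl_scale[OF bl this, of "complex_of_real (1/m)"] show ?thesis by (simp add: norm_divide)
  qed
  also have "\<dots> \<le> (1 / m) * (\<Sum>i<m. N (w \<circ> r i))"
    using bl_sum[OF bl, of "{..<m}" "\<lambda>i. w \<circ> r i"] vv by (intro mult_left_mono) simp_all
  also have "\<dots> = N w" using Nwr m by simp
  finally have calc: "N (\<lambda>k. complex_of_real (1 / m) * (\<Sum>i<m. (w \<circ> r i) k)) \<le> N w" .
  show ?thesis unfolding s_def[symmetric] sumeq using calc wy by linarith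
qed



lemma perm_S:
  assumes sym: "symmetric_lattice n N" and S: "S \<subseteq> {..<n}" "card S = m"
  shows "N (\<lambda>k. if k \<in> S then c else 0) = N (\<lambda>k. if k < m then c else 0)"
proof -
  have perm: "\<And>\<sigma> z. \<sigma> permutes {..<n} \<Longrightarrow> z \<in> vecs n \<Longrightarrow> N (z \<circ> \<sigma>) = N z"
    using sym by (simp add: symmetric_lattice_def)
  have fS: "finite S" using S finite_subset by blast
  have mn: "m \<le> n" using S card_mono[OF _ S(1)] by fastforce
  obtain f1 where f1: "bij_betw f1 {..<m} S"
    using bij_betw_iff_card[of "{..<m}" S] fS S by auto
  have "card ({..<n} - S) = card {m..<n}" using S fS by (simp add: card_Diff_subset)
  then obtain f2 where f2: "bij_betw f2 {m..<n} ({..<n} - S)"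
    using bij_betw_iff_card[of "{m..<n}" "{..<n} - S"] by auto
  define g where "g = (\<lambda>k. if k < m then f1 k else if k < n then f2 k else k)"
  have g1: "bij_betw g {..<m} S"
  proof -
    have "bij_betw f1 {..<m} S = bij_betw g {..<m} S" by (rule bij_betw_cong) (simp add: g_def)
    then show ?thesis using f1 by simp
  qed
  have g2: "bij_betw g {m..<n} ({..<n} - S)"
  proof -
    have "bij_betw f2 {m..<n} ({..<n} - S) = bij_betw g {m..<n} ({..<n} - S)"
      by (rule bij_betw_cong) (simp add: g_def)
    then show ?thesis using f2 by simp
  qed
  have "bij_betw g ({..<m} \<union> {m..<n}) (S \<union> ({..<n} - S))"
    by (rule bij_betw_combine[OF g1 g2]) blast
  moreover have "{..<m} \<union> {m..<n} = {..<n}" using mn by auto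
  moreover have "S \<union> ({..<n} - S) = {..<n}" using S by auto
  ultimately have gb: "bij_betw g {..<n} {..<n}" by simp
  have gp: "g permutes {..<n}"
    by (rule bij_imp_permutes[OF gb]) (use mn in \<open>simp add: g_def\<close>)
  have v: "(\<lambda>k. if k \<in> S then c else 0) \<in> vecs n" using S by (auto simp: vecs_def)
  have "(\<lambda>k. if k \<in> S then c else 0) \<circ> g = (\<lambda>k. if k < m then c else 0)"
  proof
    fix k
    show "((\<lambda>k. if k \<in> S then c else 0) \<circ> g) k = (if k < m then c else 0)"
    proof (cases "k < m")
      case True
      then have "g k \<in> S" using g1 by (auto simp: bij_betw_def)
      then show ?thesis using True by simp
    next
      case False
      show ?thesis
      proof (cases "k < n")
        case True
        then have "g k \<in> {..<n} - S" using g2 False by (auto simp: bij_betw_def)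
        then show ?thesis using False by simp
      next
        case False2: False
        then have "g k \<notin> S" using S mn False by (auto simp: g_def)
        then show ?thesis using False by simp
      qed
    qed
  qed
  then show ?thesis using perm[OF gp v] by simp
qed



lemma exp_ge_term: "(x::real) \<ge> 0 \<Longrightarrow> x ^ m / fact m \<le> exp x"
proof -
  assume x: "x \<ge> 0"
  have s: "(\<lambda>n. x^n / fact n) sums exp x"
    using exp_converges[of x] by (simp add: divide_inverse scaleR_conv_of_real mult.commute)
  show ?thesis
    using sum_le_suminf[OF sums_summable[OF s], of "{m}"] x sums_unique[OF s]
    by (simp add: ac_simps)
qed

lemma sum_lt_if: "(m::nat) \<le> n \<Longrightarrow> (\<Sum>k<n. if k < m then f k else (0::real)) = (\<Sum>k<m. f k)"
proof -
  assume mn: "m \<le> n"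
  have "(\<Sum>k<n. if k < m then f k else (0::real)) = (\<Sum>k\<in>{..<n} \<inter> {k. k < m}. f k)"
    by (simp add: sum.If_cases)
  also have "{..<n} \<inter> {k. k < m} = {..<m}" using mn by auto
  finally show ?thesis .
qed

lemma kd_bdd:
  assumes bl: "banach_lattice n N" and x: "\<And>k. cmod (x k) \<le> 1"
  shows "bdd_above ((\<lambda>y. \<Sum>k<n. cmod (x k * y k)) ` {y\<in>vecs n. N y \<le> 1})"
proof (rule bdd_aboveI2)
  fix y assume y: "y \<in> {y\<in>vecs n. N y \<le> 1}"
  have "(\<Sum>k<n. cmod (x k * y k)) \<le> (\<Sum>k<n. Cn n N)"
  proof (rule sum_mono)
    fix k
    have "cmod (x k * y k) = cmod (x k) * cmod (y k)" by (simp add: norm_mult)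
    also have "\<dots> \<le> 1 * Cn n N"
      using x[of k] coord_bound[OF bl, of y k] y by (intro mult_mono) auto
    finally show "cmod (x k * y k) \<le> Cn n N" by simp
  qed
  then show "(\<Sum>k<n. cmod (x k * y k)) \<le> real n * Cn n N" by simp
qed

lemma zero_in_ball: "banach_lattice n N \<Longrightarrow> (\<lambda>_. 0) \<in> open_ball n N"
  using bl_zero[of n N] by (simp add: open_ball_def vecs_zero)

theorem corollary2p20:
  fixes n m :: nat and N :: "(nat \<Rightarrow> complex) \<Rightarrow> real" and J :: "(nat \<Rightarrow> nat) set"
  assumes "symmetric_lattice n N"
    and "m \<le> n"
    and "J \<subseteq> Lambda_T m n"
  shows "lambda_hat n N J \<le> exp (real m) * (fund_dual n N n / fund_dual n N m) ^ m"
proof -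
  have sym: "symmetric_lattice n N" by fact
  have bl: "banach_lattice n N" using sym by (simp add: symmetric_lattice_def)
  have mn: "m \<le> n" by fact
  define Y where "Y = {y\<in>vecs n. N y \<le> 1}"
  define P where "P = fund_dual n N n"
  define Q where "Q = fund_dual n N m"
  define M where "M = (\<lambda>\<alpha>. SUP z\<in>open_ball n N. cmod (monom n \<alpha> z))"
  have Yne: "Y \<noteq> {}" using bl_zero[OF bl] vecs_zero unfolding Y_def by force
  have Pdef: "P = (SUP y\<in>Y. \<Sum>k<n. cmod (y k))"
    unfolding P_def fund_dual_def kothe_dual_def Y_def
    by (intro SUP_cong refl sum.cong) auto
  have Qdef: "Q = (SUP y\<in>Y. \<Sum>k<m. cmod (y k))"
    unfolding Q_def fund_dual_def kothe_dual_def Y_def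
  proof (intro SUP_cong refl)
    fix y show "(\<Sum>k<n. cmod ((if k < m then 1 else 0) * y k)) = (\<Sum>k<m. cmod (y k))"
    proof -
      have "(\<Sum>k<n. cmod ((if k < m then 1 else 0) * y k)) = (\<Sum>k<n. if k < m then cmod (y k) else 0)"
        by (intro sum.cong) auto
      then show ?thesis using sum_lt_if[OF mn, of "\<lambda>k. cmod (y k)"] by simp
    qed
  qed
  have bddP: "bdd_above ((\<lambda>y. \<Sum>k<n. cmod (y k)) ` Y)"
    using kd_bdd[OF bl, of "\<lambda>_. 1"] unfolding Y_def by simp
  have bddQ: "bdd_above ((\<lambda>y. \<Sum>k<m. cmod (y k)) ` Y)"
  proof -
    have "(\<lambda>y. \<Sum>k<m. cmod (y k)) = (\<lambda>y. \<Sum>k<n. cmod ((if k < m then 1 else 0) * y k))"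
    proof
      fix y
      have "(\<Sum>k<n. cmod ((if k < m then 1 else 0) * y k)) = (\<Sum>k<n. if k < m then cmod (y k) else 0)"
        by (intro sum.cong) auto
      then show "(\<Sum>k<m. cmod (y k)) = (\<Sum>k<n. cmod ((if k < m then 1 else 0) * y k))"
        using sum_lt_if[OF mn, of "\<lambda>k. cmod (y k)"] by simp
    qed
    moreover have h: "\<And>k. cmod (if k < m then 1 else 0 :: complex) \<le> 1" by simp
    ultimately show ?thesis using kd_bdd[OF bl, of "\<lambda>k. if k < m then 1 else 0", OF h] unfolding Y_def
      by (simp only:)
  qed
  have Q0: "Q \<ge> 0"
  proof -
    obtain y where "y \<in> Y" using Yne by blast
    then show ?thesis unfolding Qdef by (intro cSUP_upper2[OF bddQ]) (auto intro: sum_nonneg)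
  qed
  have P0: "P \<ge> 0"
  proof -
    obtain y where "y \<in> Y" using Yne by blast
    then show ?thesis unfolding Pdef by (intro cSUP_upper2[OF bddP]) (auto intro: sum_nonneg)
  qed
  have sumP: "\<And>z. z \<in> open_ball n N \<Longrightarrow> (\<Sum>k<n. cmod (z k)) \<le> P"
    unfolding Pdef by (intro cSUP_upper[OF _ bddP]) (auto simp: Y_def open_ball_def)
  have bddM: "\<And>\<alpha>. \<alpha> \<in> Lambda_T m n \<Longrightarrow> bdd_above ((\<lambda>z. cmod (monom n \<alpha> z)) ` open_ball n N)"
  proof -
    fix \<alpha> assume a: "\<alpha> \<in> Lambda_T m n"
    have a1: "\<And>k. \<alpha> k \<le> 1" using a by (simp add: Lambda_T_def)
    show "bdd_above ((\<lambda>z. cmod (monom n \<alpha> z)) ` open_ball n N)"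
    proof (rule bdd_aboveI2)
      fix z assume z: "z \<in> open_ball n N"
      then have zv: "z \<in> vecs n" "N z \<le> 1" by (auto simp: open_ball_def)
      have "cmod (monom n \<alpha> z) = (\<Prod>k<n. cmod (z k) ^ \<alpha> k)"
        by (simp add: monom_def prod_norm[symmetric] norm_power)
      also have "\<dots> \<le> (\<Prod>k<n. max 1 (Cn n N))"
      proof (rule prod_mono)
        fix k assume "k \<in> {..<n}"
        have "cmod (z k) \<le> Cn n N" using coord_bound[OF bl zv] .
        then show "0 \<le> cmod (z k) ^ \<alpha> k \<and> cmod (z k) ^ \<alpha> k \<le> max 1 (Cn n N)"
          using a1[of k] by (cases "\<alpha> k") auto
      qed
      finally show "cmod (monom n \<alpha> z) \<le> max 1 (Cn n N) ^ n" by simp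
    qed
  qed
  have keyM: "\<And>\<alpha>. \<alpha> \<in> Lambda_T m n \<Longrightarrow> 0 < (Q / m) ^ m \<and> (Q / m) ^ m \<le> M \<alpha>"
  proof -
    fix \<alpha> assume a: "\<alpha> \<in> Lambda_T m n"
    have Mb: "bdd_above ((\<lambda>z. cmod (monom n \<alpha> z)) ` open_ball n N)" using bddM[OF a] .
    have obne: "open_ball n N \<noteq> {}" using zero_in_ball[OF bl] by blast
    show "0 < (Q / m) ^ m \<and> (Q / m) ^ m \<le> M \<alpha>"
    proof (cases "m = 0")
      case True
      have "\<And>k. k < n \<Longrightarrow> \<alpha> k = 0" using a True by (simp add: Lambda_T_def)
      then have "\<And>z. monom n \<alpha> z = 1" by (simp add: monom_def)
      then have "M \<alpha> = 1" unfolding M_def using obne by simp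
      then show ?thesis using True by simp
    next
      case False
      then have m0: "0 < m" by simp
      obtain S where S: "S \<subseteq> {..<n}" "card S = m" "\<alpha> = ind S"
        using a bij_ind[of n m] unfolding bij_betw_def by (metis (mono_tags, lifting) imageE mem_Collect_eq)
      have n0: "0 < n" using m0 mn by simp
      define c where "c = 1 / N (ee 0)"
      have e0: "N (ee 0) > 0" using ee_pos[OF bl n0] .
      define y0 where "y0 = (\<lambda>j. complex_of_real c * ee 0 j)"
      have y0v: "y0 \<in> vecs n" unfolding y0_def by (intro vecs_scale ee_vecs[OF bl n0])
      have cpos: "c > 0" using e0 by (simp add: c_def)
      have "N y0 = c * N (ee 0)" unfolding y0_def using bl_scale[OF bl ee_vecs[OF bl n0], of "complex_of_real c"] cpos by simp
      then have Ny0: "N y0 = 1" using e0 by (simp add: c_def)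
      have "(\<Sum>k<m. cmod (y0 k)) = (\<Sum>k<m. if k = 0 then c else 0)"
        using e0 by (intro sum.cong refl) (simp add: y0_def ee_def[OF bl] c_def norm_divide)
      also have "\<dots> = c" using m0 by simp
      finally have sy0: "(\<Sum>k<m. cmod (y0 k)) = c" .
      have "c \<le> Q" unfolding Qdef using y0v Ny0 sy0 by (intro cSUP_upper2[OF bddQ]) (auto simp: Y_def)
      moreover have "c > 0" using e0 by (simp add: c_def)
      ultimately have Qp: "Q > 0" by linarith
      have M0: "M \<alpha> \<ge> 0" unfolding M_def using obne Mb
        by (meson cSUP_upper2 ex_in_conv norm_ge_zero)
      have per: "((\<Sum>k<m. cmod (y k)) / m) ^ m \<le> M \<alpha>" if y: "y \<in> Y" for y
      proof (rule field_le_mult_one_interval)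
        fix u :: real assume u: "0 < u" "u < 1"
        define s where "s = (\<Sum>k<m. cmod (y k))"
        have s0: "s \<ge> 0" unfolding s_def by (simp add: sum_nonneg)
        define t where "t = root m u"
        have t: "0 < t" "t < 1" "t ^ m = u" using u m0 by (auto simp: t_def)
        define p where "p = (\<lambda>k. if k \<in> S then complex_of_real (t * (s / m)) else 0)"
        have pv: "p \<in> vecs n" using S by (auto simp: p_def vecs_def)
        have yv: "y \<in> vecs n" "N y \<le> 1" using y by (auto simp: Y_def)
        have vS: "(\<lambda>k. if k \<in> S then complex_of_real (s / m) else 0) \<in> vecs n"
          using S by (auto simp: vecs_def)
        have "p = (\<lambda>k. complex_of_real t * (if k \<in> S then complex_of_real (s / m) else 0))"
          by (auto simp: p_def fun_eq_iff)
        then have "N p = t * N (\<lambda>k. if k \<in> S then complex_of_real (s / m) else 0)"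
          using bl_scale[OF bl vS, of "complex_of_real t"] t by simp
        also have "\<dots> = t * N (\<lambda>k. if k < m then complex_of_real (s / m) else 0)"
          using perm_S[OF sym S(1,2)] by simp
        also have "\<dots> \<le> t * N y"
          using avg_le[OF sym m0 mn yv(1)] t unfolding s_def by (intro mult_left_mono) auto
        also have "\<dots> \<le> t" using yv t by (simp add: mult_left_le)
        finally have "N p < 1" using t by linarith
        then have pb: "p \<in> open_ball n N" using pv by (simp add: open_ball_def)
        have "monom n \<alpha> p = (\<Prod>k\<in>S. p k)" using monom_ind[OF S(1)] S(3) by simp
        also have "\<dots> = (\<Prod>k\<in>S. complex_of_real (t * (s / m)))" by (intro prod.cong refl) (simp add: p_def)
        also have "\<dots> = complex_of_real ((t * (s / m)) ^ m)" using S(2) by simp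
        finally have mp: "monom n \<alpha> p = complex_of_real ((t * (s / m)) ^ m)" .
        have "cmod (monom n \<alpha> p) = (t * (s / m)) ^ m" unfolding mp norm_of_real using t s0 by simp
        also have "\<dots> = t ^ m * (s / m) ^ m" by (rule power_mult_distrib)
        also have "\<dots> = u * (s / m) ^ m" using t by simp
        finally have "u * (s / m) ^ m = cmod (monom n \<alpha> p)" by simp
        also have "\<dots> \<le> M \<alpha>" unfolding M_def using pb by (intro cSUP_upper[OF _ Mb])
        finally show "u * ((\<Sum>k<m. cmod (y k)) / m) ^ m \<le> M \<alpha>" unfolding s_def .
      qed
      have "Q \<le> m * root m (M \<alpha>)"
        unfolding Qdef
      proof (rule cSUP_least[OF Yne])
        fix y assume y: "y \<in> Y"
        have s0: "(\<Sum>k<m. cmod (y k)) / m \<ge> 0" by (simp add: sum_nonneg)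
        have "(\<Sum>k<m. cmod (y k)) / m = root m (((\<Sum>k<m. cmod (y k)) / m) ^ m)"
          using s0 m0 by (simp add: real_root_power_cancel)
        also have "\<dots> \<le> root m (M \<alpha>)" using per[OF y] m0 by simp
        finally show "(\<Sum>k<m. cmod (y k)) \<le> m * root m (M \<alpha>)" using m0 by (simp add: field_simps)
      qed
      then have "Q / m \<le> root m (M \<alpha>)" using m0 by (simp add: field_simps)
      then have "(Q / m) ^ m \<le> root m (M \<alpha>) ^ m" using Qp by (intro power_mono) auto
      also have "\<dots> = M \<alpha>" using M0 m0 by (simp add: real_root_pow_pos2)
      finally show ?thesis using Qp m0 by simp
    qed
  qed
  have cXle: "\<And>\<alpha>. \<alpha> \<in> Lambda_T m n \<Longrightarrow> cX n N \<alpha> \<le> (m / Q) ^ m"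
  proof -
    fix \<alpha> assume a: "\<alpha> \<in> Lambda_T m n"
    have "cX n N \<alpha> = 1 / M \<alpha>" by (simp add: cX_def M_def)
    also have "\<dots> \<le> 1 / (Q / m) ^ m" using keyM[OF a] by (intro divide_left_mono) auto
    also have "\<dots> = (m / Q) ^ m" by (simp add: power_divide)
    finally show "cX n N \<alpha> \<le> (m / Q) ^ m" .
  qed
  have ptwise: "(\<Sum>\<alpha>\<in>J. cX n N \<alpha> * cmod (monom n \<alpha> z)) \<le> exp (real m) * (P / Q) ^ m"
    if z: "z \<in> open_ball n N" for z
  proof -
    have "(\<Sum>\<alpha>\<in>J. cX n N \<alpha> * cmod (monom n \<alpha> z)) \<le> (\<Sum>\<alpha>\<in>J. (m / Q) ^ m * cmod (monom n \<alpha> z))"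
      using assms(3) cXle by (intro sum_mono mult_right_mono) auto
    also have "\<dots> \<le> (\<Sum>\<alpha>\<in>Lambda_T m n. (m / Q) ^ m * cmod (monom n \<alpha> z))"
      using assms(3) finite_Lambda_T Q0 by (intro sum_mono2) auto
    also have "\<dots> = (m / Q) ^ m * esym {..<n} (\<lambda>k. cmod (z k)) m"
      by (simp add: sum_distrib_left[symmetric] sum_Lambda_T)
    also have "\<dots> \<le> (m / Q) ^ m * ((\<Sum>k<n. cmod (z k)) ^ m / fact m)"
      using esym_bound[of "{..<n}" "\<lambda>k. cmod (z k)" m] Q0
      by (intro mult_left_mono) (auto simp: field_simps)
    also have "\<dots> \<le> (m / Q) ^ m * (P ^ m / fact m)"
      using sumP[OF z] Q0 by (intro mult_left_mono divide_right_mono power_mono) (auto intro: sum_nonneg)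
    also have "\<dots> = (real m ^ m / fact m) * (P / Q) ^ m"
      by (simp add: power_divide)
    also have "\<dots> \<le> exp (real m) * (P / Q) ^ m"
      using exp_ge_term[of "real m" m] P0 Q0 by (intro mult_right_mono) auto
    finally show ?thesis .
  qed
  show ?thesis
    unfolding lambda_hat_def P_def[symmetric] Q_def[symmetric]
    using zero_in_ball[OF bl] ptwise by (intro cSUP_least) auto
qed


end
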